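(* Let $\mathsf{\Sigma}\in\mathbb{R}^{N\times N_S}$ and $\mathsf{\Lambda}\in\mathbb{R}^{N\times N_L}$ be the Star-to-RWG and Loop-to-RWG matrices of a triangular surface mesh (so that $\mathsf{\Sigma}^{\mathrm T}\mathsf{\Lambda}=\mathsf{0}$), with $\mathsf{P}^\Sigma=\mathsf{\Sigma}(\mathsf{\Sigma}^{\mathrm T}\mathsf{\Sigma})^+\mathsf{\Sigma}^{\mathrm T}$, $\mathbb{P}^\Lambda=\mathsf{\Lambda}(\mathsf{\Lambda}^{\mathrm T}\mathsf{\Lambda})^+\mathsf{\Lambda}^{\mathrm T}$, and quasi-Helmholtz Laplacian filters $\mathsf{P}_n^\Sigma=\mathsf{\Sigma}((\mathsf{\Sigma}^{\mathrm T}\mathsf{\Sigma})_n)^+\mathsf{\Sigma}^{\mathrm T}$, $\mathbb{P}_n^\Lambda=\mathsf{\Lambda}((\mathsf{\Lambda}^{\mathrm T}\mathsf{\Lambda})_n)^+\mathsf{\Lambda}^{\mathrm T}$, $\mathsf{P}_n^{\Lambda H}=\mathbb{P}_n^\Lambda+\mathsf{I}-\mathsf{P}^\Sigma-\mathbb{P}^\Lambda$, $\mathbb{P}_n^{\Sigma H}=\mathsf{P}_n^\Sigma+\mathsf{I}-\mathbb{P}^\Lambda-\mathsf{P}^\Sigma$ (indices $n$ ranging over $1,\dots,N_S$ for the $\Sigma$-filters and $1,\dots,N_L$ for the $\Lambda$-filters). Then for all admissible $m,n$: $$\mathsf{P}_m^\Sigma\mathsf{P}_n^{\Lambda H}=\mathsf{0}\qquad\text{and}\qquad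 \mathbb{P}_m^\Lambda\mathbb{P}_n^{\Sigma H}=\mathsf{0}.$$
   Context: Consider a closed triangulated surface with $N$ edges, $N_S$ triangles and $N_L$ vertices; $\mathsf{I}$ is the $N\times N$ identity. Each edge $m$ is shared by two triangles $c_m^+$, $c_m^-$. $[\mathsf{\Sigma}]_{mn}=1$ if cell $n$ is $c_m^+$, $-1$ if cell $n$ is $c_m^-$, $0$ otherwise. $[\mathsf{\Lambda}]_{mn}=\pm1$ when vertex $n$ is an endpoint of edge $m$ (opposite signs for the two endpoints, fixed by the orientation convention of the RWG functions), $0$ otherwise; with this convention $\mathsf{\Sigma}^{\mathrm T}\mathsf{\Lambda}=\mathsf{0}$. $^+$ denotes the Moore–Penrose pseudo-inverse. For $\mathsf{X}\in\{\mathsf{\Sigma},\mathsf{\Lambda}\}$ with $N_x$ columns, fix an SVD $\mathsf{X}=\mathsf{U}_X\mathsf{S}_X\mathsf{V}_X^{\mathrm T}$ with $\mathsf{V}_X$ orthogonal $N_x\times N_x$ and singular values $\sigma_{X,1}\ge\dots\ge\sigma_{X,N_x}\ge0$, so $\mathsf{X}^{\mathrm T}\mathsf{X}=\mathsf{V}_X\mathrm{diag}(\sigma_{X,i}^2)\mathsf{V}_X^{\mathrm T}$. For $1\le n\le N_x$, $\mathsf{L}_{X,n}$ is diagonal with $[\mathsf{L}_{X,n}]_{ii}=\sigma_{X,i}$ if $i>N_x-n$ and $0$ otherwise, and $(\mathsf{X}^{\mathrm T}\mathsf{X})_n=\mathsf{V}_X\mathsf{L}_{X,n}^2\mathsf{V}_X^{\mathrm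 T}$. *)

theory Defs
  imports "Jordan_Normal_Form.Matrix"
begin

definition pinv :: "real mat \<Rightarrow> real mat" where
  "pinv A = (THE X. X \<in> carrier_mat (dim_col A) (dim_row A) \<and>
                    A * X * A = A \<and> X * A * X = X \<and>
                    transpose_mat (A * X) = A * X \<and> transpose_mat (X * A) = X * A)"

definition orth_mat :: "nat \<Rightarrow> real mat \<Rightarrow> bool" where
  "orth_mat n V \<longleftrightarrow> V \<in> carrier_mat n n \<and> transpose_mat V * V = 1\<^sub>m n \<and> V * transpose_mat V = 1\<^sub>m n"

definition is_svd :: "real mat \<Rightarrow> real mat \<Rightarrow> (nat \<Rightarrow> real) \<Rightarrow> real mat \<Rightarrow> bool" where
  "is_svd X U \<sigma> V \<longleftrightarrow>
     orth_mat (dim_row X) U \<and> orth_mat (dim_col X) V \<and>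
     (\<forall>i<dim_col X. 0 \<le> \<sigma> i) \<and>
     (\<forall>i j. i \<le> j \<and> j < dim_col X \<longrightarrow> \<sigma> j \<le> \<sigma> i) \<and>
     X = U * mat (dim_row X) (dim_col X) (\<lambda>(i,j). if i = j then \<sigma> i else 0) * transpose_mat V"

text \<open>L_{X,n}: keeps the n smallest singular values. With 0-based index i, the
  paper's condition (1-based) i' > N_x - n becomes i >= N_x - n.\<close>
definition Lmat :: "nat \<Rightarrow> (nat \<Rightarrow> real) \<Rightarrow> nat \<Rightarrow> real mat" where
  "Lmat Nx \<sigma> n = mat Nx Nx (\<lambda>(i,j). if i = j \<and> Nx - n \<le> i then \<sigma> i else 0)"

definition gram_n :: "nat \<Rightarrow> real mat \<Rightarrow> (nat \<Rightarrow> real) \<Rightarrow> nat \<Rightarrow> real mat" where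
  "gram_n Nx V \<sigma> n = V * (Lmat Nx \<sigma> n * Lmat Nx \<sigma> n) * transpose_mat V"

definition proj :: "real mat \<Rightarrow> real mat" where
  "proj X = X * pinv (transpose_mat X * X) * transpose_mat X"

definition filt :: "real mat \<Rightarrow> real mat \<Rightarrow> (nat \<Rightarrow> real) \<Rightarrow> nat \<Rightarrow> real mat" where
  "filt X V \<sigma> n = X * pinv (gram_n (dim_col X) V \<sigma> n) * transpose_mat X"

definition star_to_rwg :: "nat \<Rightarrow> nat \<Rightarrow> real mat \<Rightarrow> bool" where
  "star_to_rwg N NS S \<longleftrightarrow> S \<in> carrier_mat N NS \<and>
     (\<forall>m<N. \<exists>p q. p < NS \<and> q < NS \<and> p \<noteq> q \<and> S $$ (m,p) = 1 \<and> S $$ (m,q) = -1 \<and>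
        (\<forall>k<NS. k \<noteq> p \<and> k \<noteq> q \<longrightarrow> S $$ (m,k) = 0))"

definition loop_to_rwg :: "nat \<Rightarrow> nat \<Rightarrow> real mat \<Rightarrow> bool" where
  "loop_to_rwg N NL L \<longleftrightarrow> L \<in> carrier_mat N NL \<and>
     (\<forall>m<N. \<exists>a b s. a < NL \<and> b < NL \<and> a \<noteq> b \<and> (s = 1 \<or> s = -1) \<and>
        L $$ (m,a) = s \<and> L $$ (m,b) = -s \<and>
        (\<forall>k<NL. k \<noteq> a \<and> k \<noteq> b \<longrightarrow> L $$ (m,k) = 0))"

end

theory Submission
  imports Defs
begin


definition diagm :: "nat \<Rightarrow> (nat \<Rightarrow> real) \<Rightarrow> real mat" where
  "diagm n f = mat n n (\<lambda>(i,j). if i = j then f i else 0)"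

lemma diagm_carrier[simp]: "diagm n f \<in> carrier_mat n n"
  by (simp add: diagm_def)

lemma diagm_mult: "diagm n f * diagm n g = diagm n (\<lambda>i. f i * g i)"
proof (rule eq_matI)
  fix i j assume i: "i < dim_row (diagm n (\<lambda>i. f i * g i))" and j: "j < dim_col (diagm n (\<lambda>i. f i * g i))"
  then have "(diagm n f * diagm n g) $$ (i,j) = (\<Sum>k<n. (if i = k then f i else 0) * (if k = j then g k else 0))"
    by (simp add: diagm_def scalar_prod_def lessThan_atLeast0)
  also have "\<dots> = (\<Sum>k<n. if k = i then (if i = j then f i * g i else 0) else 0)"
    by (rule sum.cong) auto
  also have "\<dots> = diagm n (\<lambda>i. f i * g i) $$ (i,j)" using i j by (simp add: diagm_def)
  finally show "(diagm n f * diagm n g) $$ (i,j) = diagm n (\<lambda>i. f i * g i) $$ (i,j)" .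
qed (auto simp: diagm_def)

lemma diagm_transpose: "transpose_mat (diagm n f) = diagm n f"
  by (auto simp: diagm_def)

lemma conj_carrier: "orth_mat n V \<Longrightarrow> V * diagm n f * transpose_mat V \<in> carrier_mat n n"
  unfolding orth_mat_def by auto

lemma conj_mult:
  assumes V: "orth_mat n V"
  shows "(V * diagm n f * transpose_mat V) * (V * diagm n g * transpose_mat V)
        = V * diagm n (\<lambda>i. f i * g i) * transpose_mat V"
proof -
  have Vc: "V \<in> carrier_mat n n" and VV: "transpose_mat V * V = 1\<^sub>m n" using V by (auto simp: orth_mat_def)
  have Vt: "transpose_mat V \<in> carrier_mat n n" using Vc by simp
  let ?D = "diagm n f" and ?E = "diagm n g"
  have c1: "V * ?D \<in> carrier_mat n n" "V * ?E \<in> carrier_mat n n"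
    "V * ?E * transpose_mat V \<in> carrier_mat n n" "?E * transpose_mat V \<in> carrier_mat n n"
    "transpose_mat V * V \<in> carrier_mat n n"
    using Vc Vt by (meson diagm_carrier mult_carrier_mat)+
  have "(V * ?D * transpose_mat V) * (V * ?E * transpose_mat V)
     = V * ?D * (transpose_mat V * (V * ?E * transpose_mat V))"
    by (rule assoc_mult_mat[OF c1(1) Vt c1(3)])
  also have "transpose_mat V * (V * ?E * transpose_mat V) = (transpose_mat V * V) * ?E * transpose_mat V"
    using assoc_mult_mat[OF Vt c1(2) Vt] assoc_mult_mat[OF Vt Vc diagm_carrier] by simp
  also have "\<dots> = ?E * transpose_mat V" using VV Vt by (simp add: left_mult_one_mat[of _ n n])
  also have "V * ?D * (?E * transpose_mat V) = V * (?D * ?E) * transpose_mat V"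
    using assoc_mult_mat[OF Vc diagm_carrier diagm_carrier] assoc_mult_mat[OF c1(1) diagm_carrier Vt] by simp
  finally show ?thesis by (simp add: diagm_mult)
qed

lemma conj_transpose:
  assumes V: "orth_mat n V"
  shows "transpose_mat (V * diagm n f * transpose_mat V) = V * diagm n f * transpose_mat V"
proof -
  have Vc: "V \<in> carrier_mat n n" using V by (auto simp: orth_mat_def)
  have Vt: "transpose_mat V \<in> carrier_mat n n" using Vc by simp
  have c: "V * diagm n f \<in> carrier_mat n n" using Vc by (meson diagm_carrier mult_carrier_mat)
  have "transpose_mat (V * diagm n f * transpose_mat V) = V * transpose_mat (V * diagm n f)"
    using transpose_mult[OF c Vt] by simp
  also have "\<dots> = V * (diagm n f * transpose_mat V)"
    using transpose_mult[OF Vc diagm_carrier] diagm_transpose by simp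
  also have "\<dots> = V * diagm n f * transpose_mat V"
    using assoc_mult_mat[OF Vc diagm_carrier Vt] by simp
  finally show ?thesis .
qed



lemma sq_mult[simp]: "A \<in> carrier_mat n n \<Longrightarrow> B \<in> carrier_mat n n \<Longrightarrow> A * B \<in> carrier_mat n n"
  by (rule mult_carrier_mat)

lemma ext_eq: "A \<in> carrier_mat n n \<Longrightarrow> B \<in> carrier_mat n n \<Longrightarrow> Z \<in> carrier_mat n n \<Longrightarrow> A = B \<Longrightarrow> A * Z = B * Z"
  by simp

lemma pinv_unique:
  fixes A X Y :: "real mat"
  assumes A: "A \<in> carrier_mat n n" and X: "X \<in> carrier_mat n n" and Y: "Y \<in> carrier_mat n n"
  and x1: "A * X * A = A" and x2: "X * A * X = X" and x3: "transpose_mat (A * X) = A * X"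
  and x4: "transpose_mat (X * A) = X * A"
  and y1: "A * Y * A = A" and y2: "Y * A * Y = Y" and y3: "transpose_mat (A * Y) = A * Y"
  and y4: "transpose_mat (Y * A) = Y * A"
  shows "X = Y"
proof -
  have At: "transpose_mat A \<in> carrier_mat n n" and Xt: "transpose_mat X \<in> carrier_mat n n"
    and Yt: "transpose_mat Y \<in> carrier_mat n n" using A X Y by auto
  have x3': "transpose_mat X * transpose_mat A = A * X" using x3 transpose_mult[OF A X] by simp
  have x4': "transpose_mat A * transpose_mat X = X * A" using x4 transpose_mult[OF X A] by simp
  have y3': "transpose_mat Y * transpose_mat A = A * Y" using y3 transpose_mult[OF A Y] by simp
  have y4': "transpose_mat A * transpose_mat Y = Y * A" using y4 transpose_mult[OF Y A] by simp
  have At1: "transpose_mat A = transpose_mat A * transpose_mat Y * transpose_mat A"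
  proof -
    have "transpose_mat A = transpose_mat (A * Y * A)" using y1 by simp
    also have "\<dots> = transpose_mat A * transpose_mat (A * Y)"
      using transpose_mult[OF sq_mult[OF A Y] A] .
    also have "\<dots> = transpose_mat A * (transpose_mat Y * transpose_mat A)"
      using transpose_mult[OF A Y] by simp
    finally show ?thesis using At Yt by simp
  qed
  have At2: "transpose_mat A = transpose_mat A * transpose_mat X * transpose_mat A"
  proof -
    have "transpose_mat A = transpose_mat (A * X * A)" using x1 by simp
    also have "\<dots> = transpose_mat A * transpose_mat (A * X)"
      using transpose_mult[OF sq_mult[OF A X] A] .
    also have "\<dots> = transpose_mat A * (transpose_mat X * transpose_mat A)"
      using transpose_mult[OF A X] by simp
    finally show ?thesis using At Xt by simp
  qed
  have "X = X * (A * X)" using x2 A X by simp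
  also have "\<dots> = X * (transpose_mat X * transpose_mat A)" using x3' by simp
  also have "\<dots> = X * transpose_mat X * (transpose_mat A)" using A X by simp
  also have "\<dots> = X * transpose_mat X * (transpose_mat A * transpose_mat Y * transpose_mat A)"
    using At1 by simp
  also have "\<dots> = X * (transpose_mat X * transpose_mat A) * (transpose_mat Y * transpose_mat A)"
    using A X Y At Xt Yt by (simp add: assoc_mult_mat[of _ n n _ n _ n])
  also have "\<dots> = X * (A * X) * (A * Y)" using x3' y3' by simp
  also have "\<dots> = (X * A * X) * A * Y" using A X Y by (simp add: assoc_mult_mat[of _ n n _ n _ n])
  also have "\<dots> = X * A * Y" using x2 by simp
  finally have eX: "X = X * A * Y" .
  have "Y = (Y * A) * Y" using y2 A Y by simp
  also have "\<dots> = (transpose_mat A * transpose_mat Y) * Y" using y4' by simp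
  also have "\<dots> = (transpose_mat A * transpose_mat X * transpose_mat A) * transpose_mat Y * Y"
    using At2 by simp
  also have "\<dots> = (transpose_mat A * transpose_mat X) * (transpose_mat A * transpose_mat Y) * Y"
    using A X Y At Xt Yt by (simp add: assoc_mult_mat[of _ n n _ n _ n])
  also have "\<dots> = (X * A) * (Y * A) * Y" using x4' y4' by simp
  also have "\<dots> = X * A * (Y * A * Y)" using A X Y by (simp add: assoc_mult_mat[of _ n n _ n _ n])
  also have "\<dots> = X * A * Y" using y2 by simp
  finally have eY: "Y = X * A * Y" .
  show ?thesis using eX eY by simp
qed



lemma MMT0:
  fixes H :: "real mat"
  assumes H: "H \<in> carrier_mat k N" and z: "H * transpose_mat H = 0\<^sub>m k k"
  shows "H = 0\<^sub>m k N"
proof (rule eq_matI)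
  fix i j assume i: "i < dim_row (0\<^sub>m k N)" and j: "j < dim_col (0\<^sub>m k N)"
  have "(H * transpose_mat H) $$ (i,i) = (\<Sum>t<N. H $$ (i,t) * H $$ (i,t))"
    using H i by (simp add: scalar_prod_def lessThan_atLeast0)
  hence s: "(\<Sum>t<N. H $$ (i,t) * H $$ (i,t)) = 0" using z i by simp
  have "\<forall>t\<in>{..<N}. H $$ (i,t) * H $$ (i,t) = 0"
    using sum_nonneg_eq_0_iff[of "{..<N}" "\<lambda>t. H $$ (i,t) * H $$ (i,t)"] s by simp
  then show "H $$ (i,j) = 0\<^sub>m k N $$ (i,j)" using i j by simp
qed (use H in auto)

lemma minus_zero_eq:
  fixes M K :: "real mat"
  assumes "M \<in> carrier_mat a b" "K \<in> carrier_mat a b" "M - K = 0\<^sub>m a b"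
  shows "M = K"
proof (rule eq_matI)
  fix i j assume "i < dim_row K" "j < dim_col K"
  then have "(M - K) $$ (i,j) = 0" using assms by simp
  moreover have "(M - K) $$ (i,j) = M $$ (i,j) - K $$ (i,j)"
    using assms(1,2) \<open>i < dim_row K\<close> \<open>j < dim_col K\<close> by (simp add: index_minus_mat)
  ultimately show "M $$ (i,j) = K $$ (i,j)" by simp
qed (use assms in auto)

lemma key_proj:
  fixes X P :: "real mat"
  assumes X: "X \<in> carrier_mat N k" and P: "P \<in> carrier_mat k k"
    and GPG: "transpose_mat X * X * P * (transpose_mat X * X) = transpose_mat X * X"
  shows "transpose_mat X * X * P * transpose_mat X = transpose_mat X"
proof -
  define G where "G = transpose_mat X * X"
  have Xt: "transpose_mat X \<in> carrier_mat k N" using X by simp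
  have G: "G \<in> carrier_mat k k" using X unfolding G_def by auto
  have GP: "G * P \<in> carrier_mat k k" using G P by auto
  have Gt: "transpose_mat G = G" unfolding G_def using transpose_mult[OF Xt X] by simp
  define H where "H = G * P * transpose_mat X - transpose_mat X"
  have GPX: "G * P * transpose_mat X \<in> carrier_mat k N" using GP Xt by auto
  have H: "H \<in> carrier_mat k N" unfolding H_def using minus_carrier_mat[OF Xt] .
  have "H * X = G * P * transpose_mat X * X - transpose_mat X * X"
    unfolding H_def using minus_mult_distrib_mat[OF GPX Xt X] .
  also have "G * P * transpose_mat X * X = G * P * (transpose_mat X * X)"
    by (rule assoc_mult_mat[OF GP Xt X])
  also have "transpose_mat X * X = G" by (simp add: G_def)
  also have "G * P * G = G" using GPG unfolding G_def .
  also have "G - G = 0\<^sub>m k k" by (rule minus_r_inv_mat[OF G])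
  finally have HX: "H * X = 0\<^sub>m k k" .
  have Ht: "transpose_mat H = X * (transpose_mat P * G) - X"
  proof -
    have "transpose_mat H = transpose_mat (G * P * transpose_mat X) - X"
      unfolding H_def using transpose_minus[OF GPX Xt] by simp
    also have "transpose_mat (G * P * transpose_mat X) = X * transpose_mat (G * P)"
      using transpose_mult[OF GP Xt] by simp
    also have "transpose_mat (G * P) = transpose_mat P * G"
      using transpose_mult[OF G P] Gt by simp
    finally show ?thesis .
  qed
  have PtG: "transpose_mat P * G \<in> carrier_mat k k" using P G by auto
  have XPG: "X * (transpose_mat P * G) \<in> carrier_mat N k" using X PtG by auto
  have "H * transpose_mat H = H * (X * (transpose_mat P * G)) - H * X"
    unfolding Ht using mult_minus_distrib_mat[OF H XPG X] .
  also have "H * (X * (transpose_mat P * G)) = (H * X) * (transpose_mat P * G)"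
    using assoc_mult_mat[OF H X PtG] by simp
  also have "(H * X) * (transpose_mat P * G) = 0\<^sub>m k k" unfolding HX by (rule left_mult_zero_mat[OF PtG])
  also have "H * X = 0\<^sub>m k k" by (rule HX)
  also have "0\<^sub>m k k - 0\<^sub>m k k = (0\<^sub>m k k :: real mat)" by (rule minus_r_inv_mat) simp
  finally have "H * transpose_mat H = 0\<^sub>m k k" .
  then have "H = 0\<^sub>m k N" using MMT0[OF H] by simp
  then have "G * P * transpose_mat X - transpose_mat X = 0\<^sub>m k N" unfolding H_def .
  then show ?thesis unfolding G_def[symmetric]
    by (rule minus_zero_eq[OF GPX Xt])
qed



lemma pinv_conj:
  assumes V: "orth_mat n V"
  shows "pinv (V * diagm n d * transpose_mat V) = V * diagm n (\<lambda>i. inverse (d i)) * transpose_mat V"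
proof -
  let ?A = "V * diagm n d * transpose_mat V"
  let ?X = "V * diagm n (\<lambda>i. inverse (d i)) * transpose_mat V"
  have Ac: "?A \<in> carrier_mat n n" and Xc: "?X \<in> carrier_mat n n" using conj_carrier[OF V] by auto
  have f1: "(\<lambda>i. d i * inverse (d i) * d i) = d" by (rule ext) (simp add: field_simps)
  have f2: "(\<lambda>i. inverse (d i) * d i * inverse (d i)) = (\<lambda>i. inverse (d i))" by (rule ext) (simp add: field_simps)
  have f3: "(\<lambda>i. inverse (d i) * d i) = (\<lambda>i. d i * inverse (d i))" by (rule ext) (simp add: field_simps)
  have AX: "?A * ?X = V * diagm n (\<lambda>i. d i * inverse (d i)) * transpose_mat V" by (rule conj_mult[OF V])
  have XA: "?X * ?A = V * diagm n (\<lambda>i. d i * inverse (d i)) * transpose_mat V"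
    using conj_mult[OF V, of "\<lambda>i. inverse (d i)" d] f3 by simp
  have P1: "?A * ?X * ?A = ?A" unfolding AX conj_mult[OF V] f1 ..
  have P2: "?X * ?A * ?X = ?X" unfolding XA conj_mult[OF V] using f2 f3 by (simp add: mult.commute)
  have P3: "transpose_mat (?A * ?X) = ?A * ?X" unfolding AX by (rule conj_transpose[OF V])
  have P4: "transpose_mat (?X * ?A) = ?X * ?A" unfolding XA by (rule conj_transpose[OF V])
  show ?thesis unfolding pinv_def
  proof (rule the_equality)
    show "?X \<in> carrier_mat (dim_col ?A) (dim_row ?A) \<and> ?A * ?X * ?A = ?A \<and> ?X * ?A * ?X = ?X \<and>
      transpose_mat (?A * ?X) = ?A * ?X \<and> transpose_mat (?X * ?A) = ?X * ?A"
      using P1 P2 P3 P4 Xc Ac by auto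
  next
    fix Y assume Y: "Y \<in> carrier_mat (dim_col ?A) (dim_row ?A) \<and> ?A * Y * ?A = ?A \<and> Y * ?A * Y = Y \<and>
      transpose_mat (?A * Y) = ?A * Y \<and> transpose_mat (Y * ?A) = Y * ?A"
    have Yc: "Y \<in> carrier_mat n n" using Y Ac by auto
    show "Y = ?X"
      using pinv_unique[OF Ac Yc Xc] Y P1 P2 P3 P4 by blast
  qed
qed

lemma pinv_props:
  assumes V: "orth_mat n V" and A: "A = V * diagm n d * transpose_mat V"
  shows "pinv A \<in> carrier_mat n n \<and> A * pinv A * A = A"
proof -
  have e: "pinv A = V * diagm n (\<lambda>i. inverse (d i)) * transpose_mat V" unfolding A by (rule pinv_conj[OF V])
  have f1: "(\<lambda>i. d i * inverse (d i) * d i) = d" by (rule ext) (simp add: field_simps)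
  have "A * pinv A * A = A" unfolding e unfolding A conj_mult[OF V] f1 ..
  then show ?thesis unfolding e using conj_carrier[OF V] by simp
qed

lemma gram_svd:
  fixes X U V :: "real mat"
  assumes svd: "is_svd X U \<sigma> V" and X: "X \<in> carrier_mat N k"
  shows "transpose_mat X * X = V * diagm k (\<lambda>i. if i < N then \<sigma> i * \<sigma> i else 0) * transpose_mat V"
proof -
  define S where "S = mat N k (\<lambda>(i,j). if i = j then \<sigma> i else (0::real))"
  have dr: "dim_row X = N" and dc: "dim_col X = k" using X by auto
  have U: "U \<in> carrier_mat N N" and UU: "transpose_mat U * U = 1\<^sub>m N"
    and V: "V \<in> carrier_mat k k" and XS: "X = U * S * transpose_mat V"
    using svd unfolding is_svd_def orth_mat_def S_def dr dc by auto
  have S: "S \<in> carrier_mat N k" unfolding S_def by simp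
  have Vt: "transpose_mat V \<in> carrier_mat k k" using V by simp
  have Ut: "transpose_mat U \<in> carrier_mat N N" using U by simp
  have St: "transpose_mat S \<in> carrier_mat k N" using S by simp
  have SV: "S * transpose_mat V \<in> carrier_mat N k" using S Vt by auto
  have StUt: "transpose_mat S * transpose_mat U \<in> carrier_mat k N" using St Ut by auto
  have X1: "X = U * (S * transpose_mat V)" unfolding XS by (rule assoc_mult_mat[OF U S Vt])
  have X2: "transpose_mat X = V * (transpose_mat S * transpose_mat U)"
    unfolding X1 using transpose_mult[OF U SV] transpose_mult[OF S Vt]
      assoc_mult_mat[OF V St Ut] by simp
  have SS: "transpose_mat S * S = diagm k (\<lambda>i. if i < N then \<sigma> i * \<sigma> i else 0)"
  proof (rule eq_matI)
    fix i j assume i: "i < dim_row (diagm k (\<lambda>i. if i < N then \<sigma> i * \<sigma> i else 0))"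
      and j: "j < dim_col (diagm k (\<lambda>i. if i < N then \<sigma> i * \<sigma> i else 0))"
    have "(transpose_mat S * S) $$ (i,j) = (\<Sum>t<N. (if t = i then \<sigma> t else 0) * (if t = j then \<sigma> t else 0))"
      using i j by (simp add: S_def diagm_def scalar_prod_def lessThan_atLeast0)
    also have "\<dots> = (\<Sum>t<N. if t = i then (if i = j then \<sigma> i * \<sigma> i else 0) else 0)"
      by (rule sum.cong) auto
    also have "\<dots> = diagm k (\<lambda>i. if i < N then \<sigma> i * \<sigma> i else 0) $$ (i,j)"
      using i j by (simp add: diagm_def)
    finally show "(transpose_mat S * S) $$ (i,j) = diagm k (\<lambda>i. if i < N then \<sigma> i * \<sigma> i else 0) $$ (i,j)" .
  qed (auto simp: diagm_def S_def)
  have "transpose_mat X * X = V * ((transpose_mat S * transpose_mat U) * (U * (S * transpose_mat V)))"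
    unfolding X2 X1[symmetric] using assoc_mult_mat[OF V StUt X] by simp
  also have "(transpose_mat S * transpose_mat U) * (U * (S * transpose_mat V))
      = transpose_mat S * (transpose_mat U * (U * (S * transpose_mat V)))"
    using assoc_mult_mat[OF St Ut mult_carrier_mat[OF U SV]] .
  also have "transpose_mat U * (U * (S * transpose_mat V)) = (transpose_mat U * U) * (S * transpose_mat V)"
    using assoc_mult_mat[OF Ut U SV] by simp
  also have "\<dots> = S * transpose_mat V" unfolding UU by (rule left_mult_one_mat[OF SV])
  also have "transpose_mat S * (S * transpose_mat V) = (transpose_mat S * S) * transpose_mat V"
    using assoc_mult_mat[OF St S Vt] by simp
  also have "V * ((transpose_mat S * S) * transpose_mat V) = V * (transpose_mat S * S) * transpose_mat V"
    using assoc_mult_mat[OF V mult_carrier_mat[OF St S] Vt] by simp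
  finally show ?thesis unfolding SS .
qed

lemma gram_n_form:
  "gram_n k V \<sigma> n = V * diagm k (\<lambda>i. (if k - n \<le> i then \<sigma> i else 0) * (if k - n \<le> i then \<sigma> i else 0)) * transpose_mat V"
proof -
  have "Lmat k \<sigma> n = diagm k (\<lambda>i. if k - n \<le> i then \<sigma> i else 0)"
    unfolding Lmat_def diagm_def by (rule cong_mat) auto
  then show ?thesis unfolding gram_n_def by (simp add: diagm_mult)
qed



lemma zero_sandwich:
  fixes A B Q R :: "real mat"
  assumes A: "A \<in> carrier_mat N k" and B: "B \<in> carrier_mat N l" and Q: "Q \<in> carrier_mat k k"
    and R: "R \<in> carrier_mat l l" and AB: "transpose_mat A * B = 0\<^sub>m k l"
  shows "A * Q * transpose_mat A * (B * R * transpose_mat B) = 0\<^sub>m N N"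
proof -
  have At: "transpose_mat A \<in> carrier_mat k N" and Bt: "transpose_mat B \<in> carrier_mat l N" using A B by auto
  have AQ: "A * Q \<in> carrier_mat N k" using A Q by auto
  have BR: "B * R \<in> carrier_mat N l" using B R by auto
  have M: "B * R * transpose_mat B \<in> carrier_mat N N" using BR Bt by auto
  have "transpose_mat A * (B * R) = (transpose_mat A * B) * R" using assoc_mult_mat[OF At B R] by simp
  also have "\<dots> = 0\<^sub>m k l" unfolding AB by (rule left_mult_zero_mat[OF R])
  finally have e1: "transpose_mat A * (B * R) = 0\<^sub>m k l" .
  have "transpose_mat A * (B * R * transpose_mat B) = (transpose_mat A * (B * R)) * transpose_mat B"
    using assoc_mult_mat[OF At BR Bt] by simp
  also have "\<dots> = 0\<^sub>m k N" unfolding e1 by (rule left_mult_zero_mat[OF Bt])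
  finally have e2: "transpose_mat A * (B * R * transpose_mat B) = 0\<^sub>m k N" .
  have "A * Q * transpose_mat A * (B * R * transpose_mat B) = (A * Q) * (transpose_mat A * (B * R * transpose_mat B))"
    by (rule assoc_mult_mat[OF AQ At M])
  also have "\<dots> = 0\<^sub>m N N" unfolding e2 by (rule right_mult_zero_mat[OF AQ])
  finally show ?thesis .
qed

lemma main_gen:
  fixes A B Q P R P' :: "real mat"
  assumes A: "A \<in> carrier_mat N k" and B: "B \<in> carrier_mat N l" and AB: "transpose_mat A * B = 0\<^sub>m k l"
    and Q: "Q \<in> carrier_mat k k" and P: "P \<in> carrier_mat k k"
    and R: "R \<in> carrier_mat l l" and P': "P' \<in> carrier_mat l l"
    and key: "transpose_mat A * A * P * transpose_mat A = transpose_mat A"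
  shows "A * Q * transpose_mat A * (B * R * transpose_mat B + 1\<^sub>m N - A * P * transpose_mat A - B * P' * transpose_mat B) = 0\<^sub>m N N"
proof -
  have At: "transpose_mat A \<in> carrier_mat k N" and Bt: "transpose_mat B \<in> carrier_mat l N" using A B by auto
  define F where "F = A * Q * transpose_mat A"
  define M1 where "M1 = B * R * transpose_mat B"
  define M2 where "M2 = A * P * transpose_mat A"
  define M3 where "M3 = B * P' * transpose_mat B"
  have F: "F \<in> carrier_mat N N" unfolding F_def using A Q At by auto
  have M1: "M1 \<in> carrier_mat N N" unfolding M1_def using B R Bt by auto
  have M2: "M2 \<in> carrier_mat N N" unfolding M2_def using A P At by auto
  have M3: "M3 \<in> carrier_mat N N" unfolding M3_def using B P' Bt by auto
  have one: "1\<^sub>m N \<in> carrier_mat N N" by simp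
  have z1: "F * M1 = 0\<^sub>m N N" unfolding F_def M1_def by (rule zero_sandwich[OF A B Q R AB])
  have z3: "F * M3 = 0\<^sub>m N N" unfolding F_def M3_def by (rule zero_sandwich[OF A B Q P' AB])
  have AQ: "A * Q \<in> carrier_mat N k" using A Q by auto
  have AP: "A * P \<in> carrier_mat N k" using A P by auto
  have "transpose_mat A * M2 = (transpose_mat A * (A * P)) * transpose_mat A"
    unfolding M2_def using assoc_mult_mat[OF At AP At] by simp
  also have "transpose_mat A * (A * P) = transpose_mat A * A * P" using assoc_mult_mat[OF At A P] by simp
  finally have AM2: "transpose_mat A * M2 = transpose_mat A" using key by simp
  have z2: "F * M2 = F" unfolding F_def
    using assoc_mult_mat[OF AQ At M2] AM2 by simp
  have s1: "M1 + 1\<^sub>m N \<in> carrier_mat N N" using M1 by simp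
  have s2: "M1 + 1\<^sub>m N - M2 \<in> carrier_mat N N" using minus_carrier_mat[OF M2] .
  have "F * (M1 + 1\<^sub>m N - M2 - M3) = F * (M1 + 1\<^sub>m N - M2) - F * M3"
    by (rule mult_minus_distrib_mat[OF F s2 M3])
  also have "F * (M1 + 1\<^sub>m N - M2) = F * (M1 + 1\<^sub>m N) - F * M2"
    by (rule mult_minus_distrib_mat[OF F s1 M2])
  also have "F * (M1 + 1\<^sub>m N) = F * M1 + F * 1\<^sub>m N"
    by (rule mult_add_distrib_mat[OF F M1 one])
  also have "F * 1\<^sub>m N = F" by (rule right_mult_one_mat[OF F])
  finally have e: "F * (M1 + 1\<^sub>m N - M2 - M3) = 0\<^sub>m N N + F - F - 0\<^sub>m N N" unfolding z1 z2 z3 .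
  have "0\<^sub>m N N + F - F - 0\<^sub>m N N = 0\<^sub>m N N"
    by (rule eq_matI) (use F in auto)
  with e show ?thesis unfolding F_def M1_def M2_def M3_def by simp
qed


theorem mainTheorem5:
  fixes N NS NL :: nat
    and Sg Lm US VS UL VL :: "real mat"
    and \<sigma>S \<sigma>L :: "nat \<Rightarrow> real"
  assumes Sg: "star_to_rwg N NS Sg"
    and Lm: "loop_to_rwg N NL Lm"
    and orth: "transpose_mat Sg * Lm = 0\<^sub>m NS NL"
    and svdS: "is_svd Sg US \<sigma>S VS"
    and svdL: "is_svd Lm UL \<sigma>L VL"
  shows "(\<forall>m n. 1 \<le> m \<and> m \<le> NS \<and> 1 \<le> n \<and> n \<le> NL \<longrightarrow>
            filt Sg VS \<sigma>S m *
              (filt Lm VL \<sigma>L n + 1\<^sub>m N - proj Sg - proj Lm) = 0\<^sub>m N N)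
       \<and> (\<forall>m n. 1 \<le> m \<and> m \<le> NL \<and> 1 \<le> n \<and> n \<le> NS \<longrightarrow>
            filt Lm VL \<sigma>L m *
              (filt Sg VS \<sigma>S n + 1\<^sub>m N - proj Lm - proj Sg) = 0\<^sub>m N N)"
proof -
  have A: "Sg \<in> carrier_mat N NS" using Sg unfolding star_to_rwg_def by simp
  have B: "Lm \<in> carrier_mat N NL" using Lm unfolding loop_to_rwg_def by simp
  have dA: "dim_col Sg = NS" using A by simp
  have dB: "dim_col Lm = NL" using B by simp
  have VS: "orth_mat NS VS" using svdS dA unfolding is_svd_def by simp
  have VL: "orth_mat NL VL" using svdL dB unfolding is_svd_def by simp
  have PA: "pinv (transpose_mat Sg * Sg) \<in> carrier_mat NS NS \<and>
     transpose_mat Sg * Sg * pinv (transpose_mat Sg * Sg) * (transpose_mat Sg * Sg) = transpose_mat Sg * Sg"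
    by (rule pinv_props[OF VS gram_svd[OF svdS A]])
  have PB: "pinv (transpose_mat Lm * Lm) \<in> carrier_mat NL NL \<and>
     transpose_mat Lm * Lm * pinv (transpose_mat Lm * Lm) * (transpose_mat Lm * Lm) = transpose_mat Lm * Lm"
    by (rule pinv_props[OF VL gram_svd[OF svdL B]])
  have keyA: "transpose_mat Sg * Sg * pinv (transpose_mat Sg * Sg) * transpose_mat Sg = transpose_mat Sg"
    using key_proj[OF A] PA by blast
  have keyB: "transpose_mat Lm * Lm * pinv (transpose_mat Lm * Lm) * transpose_mat Lm = transpose_mat Lm"
    using key_proj[OF B] PB by blast
  have QA: "pinv (gram_n NS VS \<sigma>S m) \<in> carrier_mat NS NS" for m
    using pinv_props[OF VS gram_n_form] by blast
  have QB: "pinv (gram_n NL VL \<sigma>L m) \<in> carrier_mat NL NL" for m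
    using pinv_props[OF VL gram_n_form] by blast
  have orth2: "transpose_mat Lm * Sg = 0\<^sub>m NL NS"
  proof -
    have "transpose_mat (transpose_mat Sg * Lm) = transpose_mat Lm * Sg"
      using transpose_mult[OF transpose_carrier_mat[THEN iffD2, OF A] B] by simp
    then show ?thesis using orth by simp
  qed
  show ?thesis
    unfolding filt_def proj_def dA dB
    using main_gen[OF A B orth QA PA[THEN conjunct1] QB PB[THEN conjunct1] keyA]
      main_gen[OF B A orth2 QB PB[THEN conjunct1] QA PA[THEN conjunct1] keyB]
    by blast
qed

end
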